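(* Every $\mathbb{B}$-sober bitopological space is d-sober, and hence join sober (i.e. the topological space $(X,\tau[tt]\vee\tau[ff])$ is sober).
   Context: $\mathbb{B}=\{0,1,tt,ff\}$ is the four-element Boolean algebra with bottom $0$, top $1$, and $tt,ff$ incomparable complements. A bitopological space $(X,\tau[tt],\tau[ff])$ is identified with the $\mathbb{B}$-topology $\tau=\{\lambda\colon X\to\mathbb{B}: \lambda[tt]\in\tau[tt],\ \lambda[ff]\in\tau[ff]\}$, where $\lambda[b]=\{x:\lambda(x)\ge b\}$; $b_X$ is the constant map with value $b$. A $\mathbb{B}$-point of $\tau$ is a frame homomorphism $p\colon\tau\to\mathbb{B}$ with $p(b_X)=b$ for all $b$; the space is $\mathbb{B}$-sober if for every $\mathbb{B}$-point $p$ there is a unique $x$ with $p(\lambda)=\lambda(x)$ for all $\lambda\in\tau$. A d-point of $(X,\tau[tt],\tau[ff])$ is a pair of frame homomorphisms $p_{tt}\colon\tau[tt]\to\{0,1\}$, $p_{ff}\colon\tau[ff]\to\{0,1\}$ such that: if $U\in\tau[tt]$, $V\in\tau[ff]$ and $U\cap V=\emptyset$ then $p_{tt}(U)=0$ or $p_{ff}(V)=0$; and if $U\cup V=X$ then $p_{tt}(U)=1$ or $p_{ff}(V)=1$. Each $x\in X$ gives the d-point $[x]$ with $[x]_{tt}(U)=1\iff x\in U$, $[x]_{ff}(V)=1\iff x\in V$. The space is d-sober if every d-point equals $[x]$ for a unique $x$. A topological space is sober if every irreducible closed set is the closure of a unique point. *)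

theory Defs
  imports "HOL-Analysis.Analysis" "HOL-Library.Product_Order"
begin

text \<open>The four-element Boolean algebra B = {0,1,tt,ff} is modelled as bool \<times> bool with the
componentwise (product) order: 0 = (False,False), 1 = (True,True), tt = (True,False),
ff = (False,True).\<close>

type_synonym B4 = "bool \<times> bool"

definition bzero :: B4 where "bzero = (False, False)"
definition bone :: B4 where "bone = (True, True)"
definition btt :: B4 where "btt = (True, False)"
definition bff :: B4 where "bff = (False, True)"

text \<open>A bitopological space is a pair of topologies T1 = tau[tt], T2 = tau[ff] on the same carrier.\<close>

definition bitop_space :: "'a topology \<Rightarrow> 'a topology \<Rightarrow> bool" where
  "bitop_space T1 T2 \<longleftrightarrow> topspace T1 = topspace T2"

definition bcut :: "'a set \<Rightarrow> ('a \<Rightarrow> B4) \<Rightarrow> B4 \<Rightarrow> 'a set" where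
  "bcut X l b = {x \<in> X. b \<le> l x}"

definition bconst :: "'a set \<Rightarrow> B4 \<Rightarrow> 'a \<Rightarrow> B4" where
  "bconst X b = (\<lambda>x. if x \<in> X then b else bzero)"

definition btopology :: "'a topology \<Rightarrow> 'a topology \<Rightarrow> ('a \<Rightarrow> B4) set" where
  "btopology T1 T2 = {l. (\<forall>x. x \<notin> topspace T1 \<longrightarrow> l x = bzero)
       \<and> openin T1 (bcut (topspace T1) l btt) \<and> openin T2 (bcut (topspace T1) l bff)}"

text \<open>B-point: frame homomorphism tau \<rightarrow> B (joins and finite meets in tau are pointwise)
with p(b_X) = b for all b.\<close>
definition B_point :: "'a topology \<Rightarrow> 'a topology \<Rightarrow> (('a \<Rightarrow> B4) \<Rightarrow> B4) \<Rightarrow> bool" where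
  "B_point T1 T2 p \<longleftrightarrow>
     (\<forall>S. S \<subseteq> btopology T1 T2 \<longrightarrow> p (Sup S) = Sup (p ` S))
   \<and> (\<forall>l \<in> btopology T1 T2. \<forall>m \<in> btopology T1 T2. p (inf l m) = inf (p l) (p m))
   \<and> (\<forall>b. p (bconst (topspace T1) b) = b)"

definition B_sober :: "'a topology \<Rightarrow> 'a topology \<Rightarrow> bool" where
  "B_sober T1 T2 \<longleftrightarrow> (\<forall>p. B_point T1 T2 p \<longrightarrow>
      (\<exists>!x. x \<in> topspace T1 \<and> (\<forall>l \<in> btopology T1 T2. p l = l x)))"

definition frame_hom2 :: "'a topology \<Rightarrow> ('a set \<Rightarrow> bool) \<Rightarrow> bool" where
  "frame_hom2 T p \<longleftrightarrow>
     (\<forall>S. (\<forall>U \<in> S. openin T U) \<longrightarrow> p (\<Union>S) = (\<exists>U \<in> S. p U))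
   \<and> (\<forall>U V. openin T U \<longrightarrow> openin T V \<longrightarrow> p (U \<inter> V) = (p U \<and> p V))
   \<and> p (topspace T)"

definition d_point :: "'a topology \<Rightarrow> 'a topology \<Rightarrow> ('a set \<Rightarrow> bool) \<Rightarrow> ('a set \<Rightarrow> bool) \<Rightarrow> bool" where
  "d_point T1 T2 ptt pff \<longleftrightarrow> frame_hom2 T1 ptt \<and> frame_hom2 T2 pff
   \<and> (\<forall>U V. openin T1 U \<longrightarrow> openin T2 V \<longrightarrow> U \<inter> V = {} \<longrightarrow> \<not> ptt U \<or> \<not> pff V)
   \<and> (\<forall>U V. openin T1 U \<longrightarrow> openin T2 V \<longrightarrow> U \<union> V = topspace T1 \<longrightarrow> ptt U \<or> pff V)"

definition d_sober :: "'a topology \<Rightarrow> 'a topology \<Rightarrow> bool" where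
  "d_sober T1 T2 \<longleftrightarrow> (\<forall>ptt pff. d_point T1 T2 ptt pff \<longrightarrow>
      (\<exists>!x. x \<in> topspace T1 \<and> (\<forall>U. openin T1 U \<longrightarrow> ptt U = (x \<in> U))
                             \<and> (\<forall>V. openin T2 V \<longrightarrow> pff V = (x \<in> V))))"

definition irreducible_closed :: "'a topology \<Rightarrow> 'a set \<Rightarrow> bool" where
  "irreducible_closed T C \<longleftrightarrow> closedin T C \<and> C \<noteq> {} \<and>
     (\<forall>A B. closedin T A \<longrightarrow> closedin T B \<longrightarrow> C \<subseteq> A \<union> B \<longrightarrow> C \<subseteq> A \<or> C \<subseteq> B)"

definition sober :: "'a topology \<Rightarrow> bool" where
  "sober T \<longleftrightarrow> (\<forall>C. irreducible_closed T C \<longrightarrow> (\<exists>!x. x \<in> topspace T \<and> C = T closure_of {x}))"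

definition join_top :: "'a topology \<Rightarrow> 'a topology \<Rightarrow> 'a topology" where
  "join_top T1 T2 = topology_generated_by {U. openin T1 U \<or> openin T2 U}"

end

theory Submission
  imports Defs
begin

lemma bcut_tt: "bcut X l btt = {x\<in>X. fst (l x)}"
  by (auto simp: bcut_def btt_def less_eq_prod_def)

lemma bcut_ff: "bcut X l bff = {x\<in>X. snd (l x)}"
  by (auto simp: bcut_def bff_def less_eq_prod_def)

lemma frame_empty: "frame_hom2 T p \<Longrightarrow> \<not> p {}"
  unfolding frame_hom2_def by (metis Sup_empty empty_iff)

lemma dsober_part:
  assumes bt: "bitop_space T1 T2" and bs: "B_sober T1 T2"
  shows "d_sober T1 T2"
  unfolding d_sober_def
proof (intro allI impI)
  fix ptt pff assume dp: "d_point T1 T2 ptt pff"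
  define X where "X = topspace T1"
  have X2: "topspace T2 = X" using bt by (simp add: bitop_space_def X_def)
  have f1: "frame_hom2 T1 ptt" and f2: "frame_hom2 T2 pff" using dp by (auto simp: d_point_def)
  define p where "p = (\<lambda>l. (ptt (bcut X l btt), pff (bcut X l bff)))"
  have opl: "openin T1 {x\<in>X. fst (l x)}" "openin T2 {x\<in>X. snd (l x)}" if "l \<in> btopology T1 T2" for l
    using that by (auto simp: btopology_def bcut_tt bcut_ff X_def)
  have "B_point T1 T2 p"
    unfolding B_point_def
  proof (intro conjI allI impI ballI)
    fix S assume S: "S \<subseteq> btopology T1 T2"
    have e1: "{x\<in>X. fst (Sup S x)} = \<Union> ((\<lambda>l. {x\<in>X. fst (l x)}) ` S)"
      by (auto simp: fst_Sup Sup_apply image_image)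
    have e2: "{x\<in>X. snd (Sup S x)} = \<Union> ((\<lambda>l. {x\<in>X. snd (l x)}) ` S)"
      by (auto simp: snd_Sup Sup_apply image_image)
    have a1: "ptt {x\<in>X. fst (Sup S x)} = (\<exists>l\<in>S. ptt {x\<in>X. fst (l x)})"
      unfolding e1 using f1 opl(1) S unfolding frame_hom2_def by (smt (verit) image_iff subsetD)
    have a2: "pff {x\<in>X. snd (Sup S x)} = (\<exists>l\<in>S. pff {x\<in>X. snd (l x)})"
      unfolding e2 using f2 opl(2) S unfolding frame_hom2_def by (smt (verit) image_iff subsetD)
    have c1: "fst (p (Sup S)) = (\<exists>l\<in>S. fst (p l))" by (simp only: p_def bcut_tt fst_conv a1)
    have c2: "snd (p (Sup S)) = (\<exists>l\<in>S. snd (p l))" by (simp only: p_def bcut_ff snd_conv a2)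
    have d1: "fst (Sup (p ` S)) = (\<exists>l\<in>S. fst (p l))" by (simp add: fst_Sup image_image)
    have d2: "snd (Sup (p ` S)) = (\<exists>l\<in>S. snd (p l))" by (simp add: snd_Sup image_image)
    show "p (Sup S) = Sup (p ` S)"
      by (rule prod_eqI) (simp_all only: c1 c2 d1 d2)
  next
    fix l m assume l: "l \<in> btopology T1 T2" and m: "m \<in> btopology T1 T2"
    have e1: "{x\<in>X. fst (inf l m x)} = {x\<in>X. fst (l x)} \<inter> {x\<in>X. fst (m x)}" by auto
    have e2: "{x\<in>X. snd (inf l m x)} = {x\<in>X. snd (l x)} \<inter> {x\<in>X. snd (m x)}" by auto
    show "p (inf l m) = inf (p l) (p m)"
      using f1 f2 opl[OF l] opl[OF m] unfolding p_def bcut_tt bcut_ff e1 e2 frame_hom2_def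
      by simp
  next
    fix b :: B4
    obtain b1 b2 where b: "b = (b1, b2)" by force
    have t1: "ptt X" "pff X" using f1 f2 X2 by (auto simp: frame_hom2_def X_def)
    show "p (bconst (topspace T1) b) = b"
      using t1 frame_empty[OF f1] frame_empty[OF f2]
      by (cases b1; cases b2) (simp_all add: p_def bcut_tt bcut_ff bconst_def b X_def[symmetric] bzero_def)
  qed
  then obtain x where x: "x \<in> X" "\<forall>l \<in> btopology T1 T2. p l = l x"
    and xu: "\<And>y. y \<in> X \<Longrightarrow> \<forall>l \<in> btopology T1 T2. p l = l y \<Longrightarrow> y = x"
    using bs unfolding B_sober_def X_def by metis
  have P1: "ptt U = (x \<in> U)" if U: "openin T1 U" for U
  proof -
    define l where "l = (\<lambda>z. (z \<in> U, False))"
    have UX: "U \<subseteq> X" using U openin_subset X_def by blast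
    have "{x\<in>X. fst (l x)} = U" using UX by (auto simp: l_def)
    moreover have "{x\<in>X. snd (l x)} = {}" by (auto simp: l_def)
    ultimately have lb: "l \<in> btopology T1 T2"
      using U UX by (auto simp: btopology_def bcut_tt bcut_ff X_def[symmetric] l_def bzero_def)
    have "p l = l x" using x lb by blast
    thus ?thesis using UX by (simp add: p_def bcut_tt bcut_ff l_def) (metis (no_types, lifting) Collect_cong \<open>{x \<in> X. fst (l x)} = U\<close> l_def fst_conv)
  qed
  have P2: "pff V = (x \<in> V)" if V: "openin T2 V" for V
  proof -
    define l where "l = (\<lambda>z. (False, z \<in> V))"
    have UX: "V \<subseteq> X" using V openin_subset X2 by blast
    have eq: "{x\<in>X. snd (l x)} = V" using UX by (auto simp: l_def)
    moreover have "{x\<in>X. fst (l x)} = {}" by (auto simp: l_def)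
    ultimately have lb: "l \<in> btopology T1 T2"
      using V UX by (auto simp: btopology_def bcut_tt bcut_ff X_def[symmetric] l_def bzero_def)
    have "p l = l x" using x lb by blast
    thus ?thesis using eq by (simp add: p_def bcut_tt bcut_ff l_def)
  qed
  show "\<exists>!x. x \<in> topspace T1 \<and> (\<forall>U. openin T1 U \<longrightarrow> ptt U = (x \<in> U))
                             \<and> (\<forall>V. openin T2 V \<longrightarrow> pff V = (x \<in> V))"
  proof (rule ex1I[of _ x])
    show "x \<in> topspace T1 \<and> (\<forall>U. openin T1 U \<longrightarrow> ptt U = (x \<in> U)) \<and> (\<forall>V. openin T2 V \<longrightarrow> pff V = (x \<in> V))"
      using x P1 P2 X_def by blast
  next
    fix y assume y: "y \<in> topspace T1 \<and> (\<forall>U. openin T1 U \<longrightarrow> ptt U = (y \<in> U)) \<and> (\<forall>V. openin T2 V \<longrightarrow> pff V = (y \<in> V))"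
    have "\<forall>l \<in> btopology T1 T2. p l = l y"
    proof
      fix l assume l: "l \<in> btopology T1 T2"
      have "ptt {x\<in>X. fst (l x)} = fst (l y)" "pff {x\<in>X. snd (l x)} = snd (l y)"
        using y opl[OF l] X_def by auto
      thus "p l = l y" by (simp add: p_def bcut_tt bcut_ff prod_eq_iff)
    qed
    thus "y = x" using xu y X_def by blast
  qed
qed

lemma join_open_gen: "openin (join_top T1 T2) U \<longleftrightarrow> generate_topology_on {U. openin T1 U \<or> openin T2 U} U"
  unfolding join_top_def by (rule openin_topology_generated_by_iff)

lemma sober_part:
  assumes bt: "bitop_space T1 T2" and ds: "d_sober T1 T2"
  shows "sober (join_top T1 T2)"
  unfolding sober_def
proof (intro allI impI)
  fix C assume ic: "irreducible_closed (join_top T1 T2) C"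
  let ?J = "join_top T1 T2"
  define X where "X = topspace T1"
  have X2: "topspace T2 = X" using bt by (simp add: bitop_space_def X_def)
  have XJ: "topspace ?J = X"
  proof -
    have "\<Union>{U. openin T1 U \<or> openin T2 U} \<subseteq> X" using X2 X_def openin_subset by blast
    moreover have "X \<subseteq> \<Union>{U. openin T1 U \<or> openin T2 U}" using X_def openin_topspace[of T1] by blast
    ultimately show ?thesis unfolding join_top_def topology_generated_by_topspace by blast
  qed
  have o1: "openin ?J U" if "openin T1 U" for U
    using that unfolding join_top_def by (auto intro: topology_generated_by_Basis)
  have o2: "openin ?J U" if "openin T2 U" for U
    using that unfolding join_top_def by (auto intro: topology_generated_by_Basis)
  have Ccl: "closedin ?J C" and Cne: "C \<noteq> {}" using ic by (auto simp: irreducible_closed_def)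
  have CX: "C \<subseteq> X" using Ccl closedin_subset XJ by blast
  have irr: "a \<inter> b \<inter> C \<noteq> {}" if a: "openin ?J a" "a \<inter> C \<noteq> {}" and b: "openin ?J b" "b \<inter> C \<noteq> {}" for a b
  proof
    assume e: "a \<inter> b \<inter> C = {}"
    have "closedin ?J (X - a)" "closedin ?J (X - b)" using a b XJ by (metis closedin_diff closedin_topspace)+
    moreover have "C \<subseteq> (X - a) \<union> (X - b)" using e CX by blast
    ultimately have "C \<subseteq> X - a \<or> C \<subseteq> X - b" using ic unfolding irreducible_closed_def by blast
    thus False using a b by blast
  qed
  define ptt where "ptt = (\<lambda>U. U \<inter> C \<noteq> {})"
  define pff where "pff = (\<lambda>U. U \<inter> C \<noteq> {})"
  have fh: "frame_hom2 T ptt" if "\<And>U. openin T U \<Longrightarrow> openin ?J U" "topspace T = X" for T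
    unfolding frame_hom2_def ptt_def
  proof (intro conjI allI impI)
    fix U V assume U: "openin T U" and V: "openin T V"
    have "U \<inter> C \<noteq> {} \<Longrightarrow> V \<inter> C \<noteq> {} \<Longrightarrow> U \<inter> V \<inter> C \<noteq> {}"
      using irr[OF that(1)[OF U] _ that(1)[OF V]] by blast
    thus "(U \<inter> V \<inter> C \<noteq> {}) = (U \<inter> C \<noteq> {} \<and> V \<inter> C \<noteq> {})" by blast
  next
    show "topspace T \<inter> C \<noteq> {}" using that(2) CX Cne by blast
  next
    fix S assume "\<forall>U\<in>S. openin T U"
    show "(\<Union>S \<inter> C \<noteq> {}) = (\<exists>U\<in>S. U \<inter> C \<noteq> {})" by blast
  qed
  have dp: "d_point T1 T2 ptt pff"
    unfolding d_point_def
  proof (intro conjI allI impI)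
    show "frame_hom2 T1 ptt" using fh[of T1, OF o1] X_def by simp
    show "frame_hom2 T2 pff" using fh[of T2, OF o2 X2] unfolding pff_def ptt_def .
  next
    fix U V assume U: "openin T1 U" and V: "openin T2 V" and e: "U \<inter> V = {}"
    show "\<not> ptt U \<or> \<not> pff V" using irr[OF o1[OF U] _ o2[OF V]] e unfolding ptt_def pff_def by blast
  next
    fix U V assume "openin T1 U" "openin T2 V" "U \<union> V = topspace T1"
    thus "ptt U \<or> pff V" using CX Cne X_def unfolding ptt_def pff_def by blast
  qed
  then obtain x where x: "x \<in> X" "\<And>U. openin T1 U \<Longrightarrow> (U \<inter> C \<noteq> {}) = (x \<in> U)"
      "\<And>V. openin T2 V \<Longrightarrow> (V \<inter> C \<noteq> {}) = (x \<in> V)"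
    and xu: "\<And>y. y \<in> X \<Longrightarrow> (\<forall>U. openin T1 U \<longrightarrow> (U \<inter> C \<noteq> {}) = (y \<in> U)) \<Longrightarrow>
          (\<forall>V. openin T2 V \<longrightarrow> (V \<inter> C \<noteq> {}) = (y \<in> V)) \<Longrightarrow> y = x"
  proof -
    have "\<exists>!x. x \<in> topspace T1 \<and> (\<forall>U. openin T1 U \<longrightarrow> ptt U = (x \<in> U))
                             \<and> (\<forall>V. openin T2 V \<longrightarrow> pff V = (x \<in> V))"
      using ds[unfolded d_sober_def, rule_format, OF dp] .
    then obtain x where x1: "x \<in> topspace T1" and x2: "\<forall>U. openin T1 U \<longrightarrow> ptt U = (x \<in> U)"
      and x3: "\<forall>V. openin T2 V \<longrightarrow> pff V = (x \<in> V)"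
      and xu: "\<And>y. y \<in> topspace T1 \<and> (\<forall>U. openin T1 U \<longrightarrow> ptt U = (y \<in> U))
                             \<and> (\<forall>V. openin T2 V \<longrightarrow> pff V = (y \<in> V)) \<Longrightarrow> y = x"
      by (elim ex1E conjE) (rule that, assumption+, blast)
    show ?thesis
    proof (rule that)
      show "x \<in> X" using x1 X_def by simp
      show "\<And>U. openin T1 U \<Longrightarrow> (U \<inter> C \<noteq> {}) = (x \<in> U)" using x2 unfolding ptt_def by simp
      show "\<And>V. openin T2 V \<Longrightarrow> (V \<inter> C \<noteq> {}) = (x \<in> V)" using x3 unfolding pff_def by simp
      show "\<And>y. y \<in> X \<Longrightarrow> (\<forall>U. openin T1 U \<longrightarrow> (U \<inter> C \<noteq> {}) = (y \<in> U)) \<Longrightarrow>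
          (\<forall>V. openin T2 V \<longrightarrow> (V \<inter> C \<noteq> {}) = (y \<in> V)) \<Longrightarrow> y = x"
        using xu unfolding X_def ptt_def pff_def by simp
    qed
  qed
  have key: "\<And>W. openin ?J W \<Longrightarrow> (W \<inter> C \<noteq> {}) = (x \<in> W)"
  proof -
    fix W assume "openin ?J W"
    hence g: "generate_topology_on {U. openin T1 U \<or> openin T2 U} W" by (simp add: join_open_gen)
    thus "(W \<inter> C \<noteq> {}) = (x \<in> W)"
    proof induction
      case Empty then show ?case by simp
    next
      case (Int a b)
      have "openin ?J a" "openin ?J b" using Int.hyps(1,2) join_open_gen by blast+
      have "a \<inter> C \<noteq> {} \<Longrightarrow> b \<inter> C \<noteq> {} \<Longrightarrow> a \<inter> b \<inter> C \<noteq> {}"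
        using irr[OF \<open>openin ?J a\<close> _ \<open>openin ?J b\<close>] by blast
      then show ?case using Int.IH(1,2) by blast
    next
      case (UN K)
      have "(\<Union>K \<inter> C \<noteq> {}) = (\<exists>k\<in>K. k \<inter> C \<noteq> {})" by blast
      also have "\<dots> = (\<exists>k\<in>K. x \<in> k)" using UN.IH by (meson)
      finally show ?case by simp
    next
      case (Basis s)
      then have "openin T1 s \<or> openin T2 s" by simp
      then show ?case using x(2,3) by (elim disjE) simp_all
    qed
  qed
  have xC: "x \<in> C"
  proof (rule ccontr)
    assume "x \<notin> C"
    have "openin ?J (X - C)" using Ccl XJ by (metis closedin_def)
    from key[OF this] \<open>x \<notin> C\<close> x(1) show False by blast
  qed
  have Ceq: "C = ?J closure_of {x}"
  proof
    show "?J closure_of {x} \<subseteq> C" using xC Ccl by (simp add: closure_of_minimal)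
  next
    show "C \<subseteq> ?J closure_of {x}"
    proof
      fix y assume y: "y \<in> C"
      have "\<forall>T. y \<in> T \<and> openin ?J T \<longrightarrow> (\<exists>z\<in>{x}. z \<in> T)"
        using y key by blast
      thus "y \<in> ?J closure_of {x}" unfolding closure_of_def
        using y CX XJ by blast
    qed
  qed
  show "\<exists>!x. x \<in> topspace ?J \<and> C = ?J closure_of {x}"
  proof (rule ex1I[of _ x])
    show "x \<in> topspace ?J \<and> C = ?J closure_of {x}" using x(1) XJ Ceq by simp
  next
    fix y assume y: "y \<in> topspace ?J \<and> C = ?J closure_of {y}"
    have ky: "(W \<inter> C \<noteq> {}) = (y \<in> W)" if "openin ?J W" for W
    proof -
      have "(W \<inter> ?J closure_of {y} \<noteq> {}) = (W \<inter> {y} \<noteq> {})"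
        using openin_Int_closure_of_eq_empty[OF that] by blast
      thus ?thesis using y by auto
    qed
    show "y = x" apply (rule xu) using y XJ ky o1 o2 by auto
  qed
qed

theorem mainTheorem8:
  fixes T1 T2 :: "'a topology"
  assumes "bitop_space T1 T2"
    and "B_sober T1 T2"
  shows "d_sober T1 T2 \<and> sober (join_top T1 T2)"
  using assms dsober_part sober_part by blast

end
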